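(* For any graph $\Gamma$, the polygraph monoid $P(\Gamma)=IH^0(M(\Gamma))$ is strongly $E^*$-unitary.
   Context: A graph $\Gamma=(V,E)$ has vertex set $V$ and irreflexive symmetric edge relation $E$. The graph monoid $M(\Gamma)$ is presented by $\langle x_v\ (v\in V)\mid x_ux_v=x_vx_u \text{ for } (u,v)\in E\rangle$. For a right cancellative monoid $D$ and $a\in D$, $\rho_a:D\to D$, $x\mapsto xa$, is a partial bijection of $D$; $IH(D)$ is the inverse submonoid of the symmetric inverse monoid on $D$ generated by all $\rho_a$, and $IH^0(D)=IH(D)\cup\{\emptyset\}$ with the empty map as zero. An inverse monoid $S$ with zero is strongly $E^*$-unitary if there is a group $G$ and a function $\theta:S\to G^0$ ($G$ with a zero adjoined) such that $a\theta=0$ iff $a=0$, $a\theta=1$ iff $a$ is a nonzero idempotent, and $(ab)\theta=(a\theta)(b\theta)$ whenever $ab\neq 0$. *)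

theory Defs
  imports "HOL-Algebra.Group"
begin

definition is_graph :: "'v set \<Rightarrow> ('v \<Rightarrow> 'v \<Rightarrow> bool) \<Rightarrow> bool" where
  "is_graph V E \<longleftrightarrow> (\<forall>u v. E u v \<longrightarrow> u \<in> V \<and> v \<in> V) \<and>
                     (\<forall>u v. E u v \<longrightarrow> E v u) \<and> (\<forall>v. \<not> E v v)"

definition swap_step :: "('v \<Rightarrow> 'v \<Rightarrow> bool) \<Rightarrow> ('v list \<times> 'v list) set" where
  "swap_step E = {(p @ [a, b] @ q, p @ [b, a] @ q) | p a b q. E a b}"

definition trace_eq :: "('v \<Rightarrow> 'v \<Rightarrow> bool) \<Rightarrow> ('v list \<times> 'v list) set" where
  "trace_eq E = (swap_step E \<union> (swap_step E)\<inverse>)\<^sup>*"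

definition word_class :: "('v \<Rightarrow> 'v \<Rightarrow> bool) \<Rightarrow> 'v list \<Rightarrow> 'v list set" where
  "word_class E w = {w'. (w, w') \<in> trace_eq E}"

definition graph_monoid :: "'v set \<Rightarrow> ('v \<Rightarrow> 'v \<Rightarrow> bool) \<Rightarrow> 'v list set set" where
  "graph_monoid V E = {word_class E w | w. set w \<subseteq> V}"

definition gm_mult :: "('v \<Rightarrow> 'v \<Rightarrow> bool) \<Rightarrow> 'v list set \<Rightarrow> 'v list set \<Rightarrow> 'v list set" where
  "gm_mult E X Y = (\<Union>{word_class E (u @ w) | u w. u \<in> X \<and> w \<in> Y})"

text \<open>Partial bijections are represented as relations (sets of pairs); maps act on the
  right, so the product s t (first s, then t) is relational composition s O t, and the
  inverse is the converse relation.\<close>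

definition rho :: "'v set \<Rightarrow> ('v \<Rightarrow> 'v \<Rightarrow> bool) \<Rightarrow> 'v list set
                   \<Rightarrow> ('v list set \<times> 'v list set) set" where
  "rho V E a = {(x, gm_mult E x a) | x. x \<in> graph_monoid V E}"

inductive_set IH :: "'v set \<Rightarrow> ('v \<Rightarrow> 'v \<Rightarrow> bool) \<Rightarrow> ('v list set \<times> 'v list set) set set"
  for V E where
  gen: "a \<in> graph_monoid V E \<Longrightarrow> rho V E a \<in> IH V E"
| ident: "Id_on (graph_monoid V E) \<in> IH V E"
| comp: "s \<in> IH V E \<Longrightarrow> t \<in> IH V E \<Longrightarrow> s O t \<in> IH V E"
| inv: "s \<in> IH V E \<Longrightarrow> s\<inverse> \<in> IH V E"

definition polygraph_monoid ::
  "'v set \<Rightarrow> ('v \<Rightarrow> 'v \<Rightarrow> bool) \<Rightarrow> ('v list set \<times> 'v list set) set set" where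
  "polygraph_monoid V E = IH V E \<union> {{}}"

text \<open>G^0 is rendered as 'g option with None the adjoined zero.\<close>
definition strong_E_unitary_witness ::
  "'s set \<Rightarrow> ('s \<Rightarrow> 's \<Rightarrow> 's) \<Rightarrow> 's \<Rightarrow> ('g, 'm) monoid_scheme \<Rightarrow> ('s \<Rightarrow> 'g option) \<Rightarrow> bool"
  where
  "strong_E_unitary_witness S prd z G \<theta> \<longleftrightarrow>
     group G \<and>
     (\<forall>a\<in>S. \<forall>g. \<theta> a = Some g \<longrightarrow> g \<in> carrier G) \<and>
     (\<forall>a\<in>S. \<theta> a = None \<longleftrightarrow> a = z) \<and>
     (\<forall>a\<in>S. \<theta> a = Some \<one>\<^bsub>G\<^esub> \<longleftrightarrow> a \<noteq> z \<and> prd a a = a) \<and>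
     (\<forall>a\<in>S. \<forall>b\<in>S. prd a b \<noteq> z \<longrightarrow>
        \<theta> (prd a b) = Some (the (\<theta> a) \<otimes>\<^bsub>G\<^esub> the (\<theta> b)))"

text \<open>The group is existentially quantified; its elements are taken of type 's list,
  which is large enough (cardinality at least max(|S|, aleph_0)) to contain an
  isomorphic copy of the subgroup generated by the image of any such theta.\<close>
definition strongly_E_star_unitary :: "'s set \<Rightarrow> ('s \<Rightarrow> 's \<Rightarrow> 's) \<Rightarrow> 's \<Rightarrow> bool" where
  "strongly_E_star_unitary S prd z \<longleftrightarrow>
     (\<exists>(G :: 's list monoid) \<theta>. strong_E_unitary_witness S prd z G \<theta>)"

end

theory Submission
  imports Defs "HOL-Algebra.Bij" "HOL-Library.Countable"
begin


lemma swap_app: "(x,y) \<in> swap_step E \<Longrightarrow> (l@x@r, l@y@r) \<in> swap_step E"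
proof -
  assume "(x,y) \<in> swap_step E"
  then obtain p a b q where "x = p @ [a,b] @ q" "y = p @ [b,a] @ q" "E a b"
    unfolding swap_step_def by blast
  then have "l@x@r = (l@p) @ [a,b] @ (q@r) \<and> l@y@r = (l@p) @ [b,a] @ (q@r) \<and> E a b" by simp
  then show ?thesis unfolding swap_step_def by blast
qed

lemma tr_app: "(x,y) \<in> trace_eq E \<Longrightarrow> (l@x@r, l@y@r) \<in> trace_eq E"
  unfolding trace_eq_def
proof (induction rule: rtrancl_induct)
  case base then show ?case by simp
next
  case (step y z)
  then have "(l@y@r, l@z@r) \<in> swap_step E \<union> (swap_step E)\<inverse>"
    using swap_app by blast
  with step.IH show ?case by (rule rtrancl_into_rtrancl)
qed

lemma tr_refl: "(x,x) \<in> trace_eq E" unfolding trace_eq_def by simp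

lemma tr_sym: "(x,y) \<in> trace_eq E \<Longrightarrow> (y,x) \<in> trace_eq E"
proof -
  assume h: "(x,y) \<in> trace_eq E"
  have "sym ((swap_step E \<union> (swap_step E)\<inverse>)\<^sup>*)"
    by (rule sym_rtrancl) (rule sym_Un_converse)
  then show ?thesis using h unfolding trace_eq_def by (rule symD)
qed

lemma tr_trans: "(x,y) \<in> trace_eq E \<Longrightarrow> (y,z) \<in> trace_eq E \<Longrightarrow> (x,z) \<in> trace_eq E"
  unfolding trace_eq_def by simp

lemma tr_cong: "(u,u') \<in> trace_eq E \<Longrightarrow> (w,w') \<in> trace_eq E \<Longrightarrow> (u@w, u'@w') \<in> trace_eq E"
proof -
  assume "(u,u') \<in> trace_eq E" "(w,w') \<in> trace_eq E"
  then have "(u@w, u'@w) \<in> trace_eq E" "(u'@w, u'@w') \<in> trace_eq E"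
    using tr_app[of u u' E "[]" w] tr_app[of w w' E u' "[]"] by auto
  then show ?thesis by (rule tr_trans)
qed

lemma wc_eq: "word_class E u = word_class E v \<longleftrightarrow> (u,v) \<in> trace_eq E"
proof
  assume "word_class E u = word_class E v"
  moreover have "v \<in> word_class E v" unfolding word_class_def by (simp add: tr_refl)
  ultimately show "(u,v) \<in> trace_eq E" unfolding word_class_def by blast
next
  assume h: "(u,v) \<in> trace_eq E"
  have "\<And>w. (u,w) \<in> trace_eq E \<longleftrightarrow> (v,w) \<in> trace_eq E"
    using tr_trans[OF h] tr_trans[OF tr_sym[OF h]] by blast
  then show "word_class E u = word_class E v" unfolding word_class_def by blast
qed

lemma wc_mem: "u \<in> word_class E u"
  unfolding word_class_def by (simp add: tr_refl)

lemma gm_mult_wc: "gm_mult E (word_class E u) (word_class E w) = word_class E (u@w)"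
proof -
  have "\<And>u' w'. u' \<in> word_class E u \<Longrightarrow> w' \<in> word_class E w \<Longrightarrow> word_class E (u'@w') = word_class E (u@w)"
  proof -
    fix u' w' assume "u' \<in> word_class E u" "w' \<in> word_class E w"
    then have "(u,u') \<in> trace_eq E" "(w,w') \<in> trace_eq E" unfolding word_class_def by auto
    then have "(u@w, u'@w') \<in> trace_eq E" by (rule tr_cong)
    then show "word_class E (u'@w') = word_class E (u@w)" unfolding wc_eq by (rule tr_sym)
  qed
  then have 1: "\<And>Z. Z \<in> {word_class E (u' @ w') |u' w'. u' \<in> word_class E u \<and> w' \<in> word_class E w}
      \<Longrightarrow> Z = word_class E (u@w)" by auto
  have 2: "word_class E (u@w) \<in> {word_class E (u' @ w') |u' w'. u' \<in> word_class E u \<and> w' \<in> word_class E w}"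
    using wc_mem[of u E] wc_mem[of w E] by auto
  show ?thesis unfolding gm_mult_def
  proof
    show "\<Union> {word_class E (u' @ w') |u' w'. u' \<in> word_class E u \<and> w' \<in> word_class E w} \<subseteq> word_class E (u @ w)"
      by (rule Union_least, drule 1, simp)
    show "word_class E (u @ w) \<subseteq> \<Union> {word_class E (u' @ w') |u' w'. u' \<in> word_class E u \<and> w' \<in> word_class E w}"
      using 2 by (rule Union_upper)
  qed
qed

abbreviation proj :: "'v \<times> 'v \<Rightarrow> 'v list \<Rightarrow> 'v list" where
  "proj p w \<equiv> filter (\<lambda>c. c = fst p \<or> c = snd p) w"

lemma proj_swap:
  assumes sym: "\<And>a b. E a b \<Longrightarrow> E b a" and irr: "\<And>a. \<not> E a a"
    and p: "\<not> E (fst p) (snd p)" and "(x,y) \<in> swap_step E"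
  shows "proj p x = proj p y"
proof -
  obtain l a b r where xy: "x = l @ [a,b] @ r" "y = l @ [b,a] @ r" and ab: "E a b"
    using assms(4) unfolding swap_step_def by blast
  have "\<not> ((a = fst p \<or> a = snd p) \<and> (b = fst p \<or> b = snd p))"
  proof
    assume h: "(a = fst p \<or> a = snd p) \<and> (b = fst p \<or> b = snd p)"
    have "a \<noteq> b" using ab irr by blast
    then show False using h p ab sym by blast
  qed
  then show ?thesis unfolding xy by auto
qed

lemma proj_tr:
  assumes sym: "\<And>a b. E a b \<Longrightarrow> E b a" and irr: "\<And>a. \<not> E a a"
    and "\<not> E (fst p) (snd p)" and "(x,y) \<in> trace_eq E"
  shows "proj p x = proj p y"
  using assms(4) unfolding trace_eq_def
proof (induction rule: rtrancl_induct)
  case base then show ?case by simp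
next
  case (step y z)
  then show ?case using proj_swap[OF sym irr assms(3)] by auto
qed

lemma move_left:
  assumes sym: "\<And>a b. E a b \<Longrightarrow> E b a"
  shows "(\<forall>d\<in>set v1. E c d) \<Longrightarrow> (v1 @ c # v2, c # v1 @ v2) \<in> trace_eq E"
proof (induction v1)
  case Nil then show ?case by (simp add: tr_refl)
next
  case (Cons d v1)
  then have 1: "(d # v1 @ c # v2, d # c # v1 @ v2) \<in> trace_eq E"
    using tr_app[of "v1 @ c # v2" "c # v1 @ v2" E "[d]" "[]"] by simp
  have "E d c" using Cons sym by auto
  then have "([] @ [d, c] @ (v1 @ v2), [] @ [c, d] @ (v1 @ v2)) \<in> swap_step E"
    unfolding swap_step_def by blast
  then have "(d # c # v1 @ v2, c # d # v1 @ v2) \<in> trace_eq E"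
    unfolding trace_eq_def by (simp add: r_into_rtrancl)
  with 1 show ?case using tr_trans by simp
qed

lemma proj_lemma:
  assumes sym: "\<And>a b. E a b \<Longrightarrow> E b a" and irr: "\<And>a. \<not> E a a"
  shows "(\<forall>p. \<not> E (fst p) (snd p) \<longrightarrow> proj p u = proj p v) \<Longrightarrow> (u,v) \<in> trace_eq E"
proof (induction u arbitrary: v)
  case Nil
  have "v = []"
  proof (rule ccontr)
    assume "v \<noteq> []"
    then obtain c v' where "v = c # v'" by (cases v) auto
    have "proj (c,c) [] = proj (c,c) v" using Nil.prems[rule_format, of "(c,c)"] irr by simp
    with \<open>v = c # v'\<close> show False by simp
  qed
  then show ?case by (simp add: tr_refl)
next
  case (Cons c u)
  have eqc: "proj (c,c) (c#u) = proj (c,c) v" using Cons.prems[rule_format, of "(c,c)"] irr by simp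
  have "c \<in> set (proj (c,c) v)" unfolding eqc[symmetric] by simp
  then have "c \<in> set v" by simp
  then obtain v1 v2 where v: "v = v1 @ c # v2" and c1: "c \<notin> set v1"
    by (meson split_list_first)
  have E1: "\<forall>d\<in>set v1. E c d"
  proof (rule ccontr)
    assume "\<not> (\<forall>d\<in>set v1. E c d)"
    then obtain d where d: "d \<in> set v1" "\<not> E c d" by auto
    then have "proj (c,d) (c#u) = proj (c,d) v" using Cons.prems[rule_format, of "(c,d)"] by simp
    then have eq: "c # proj (c,d) u = proj (c,d) v1 @ c # proj (c,d) v2" using v by simp
    have "proj (c,d) v1 \<noteq> []" using d(1) by (force simp: filter_empty_conv)
    then obtain d' r where dr: "proj (c,d) v1 = d' # r" by (cases "proj (c,d) v1") auto
    have "d' \<in> set (proj (c,d) v1)" unfolding dr by simp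
    then have "d' \<in> set v1" by simp
    then show False using eq c1 dr by auto
  qed
  have t1: "(v, c # v1 @ v2) \<in> trace_eq E" using move_left[where E=E and ?v1.0=v1 and c=c and ?v2.0=v2, OF sym E1] v by simp
  have "\<forall>p. \<not> E (fst p) (snd p) \<longrightarrow> proj p u = proj p (v1 @ v2)"
  proof (intro allI impI)
    fix p assume p: "\<not> E (fst p) (snd p)"
    have "proj p (c#u) = proj p (c # v1 @ v2)"
      using Cons.prems[rule_format, OF p] proj_tr[OF sym irr p t1] by simp
    then show "proj p u = proj p (v1 @ v2)" by (auto split: if_splits)
  qed
  then have "(u, v1 @ v2) \<in> trace_eq E" using Cons.IH by blast
  then have "(c#u, c # v1 @ v2) \<in> trace_eq E" using tr_app[of u "v1 @ v2" E "[c]" "[]"] by simp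
  then show ?case by (rule tr_trans[OF _ tr_sym[OF t1]])
qed



type_synonym 'v pt = "('v \<times> 'v) \<times> rat"

definition dep :: "('v \<Rightarrow> 'v \<Rightarrow> bool) \<Rightarrow> 'v \<times> 'v \<Rightarrow> bool" where
  "dep E p \<longleftrightarrow> \<not> E (fst p) (snd p)"

definition beta :: "('v \<Rightarrow> 'v \<Rightarrow> bool) \<Rightarrow> 'v \<Rightarrow> 'v pt \<Rightarrow> 'v pt" where
  "beta E a = (\<lambda>(p,x). (p, if dep E p \<and> a = fst p then 3*x+1
                           else if dep E p \<and> a = snd p then 3*x+2 else x))"

definition betai :: "('v \<Rightarrow> 'v \<Rightarrow> bool) \<Rightarrow> 'v \<Rightarrow> 'v pt \<Rightarrow> 'v pt" where
  "betai E a = (\<lambda>(p,x). (p, if dep E p \<and> a = fst p then (x-1)/3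
                           else if dep E p \<and> a = snd p then (x-2)/3 else x))"

lemma bij_beta: "bij (beta E a)"
proof (rule o_bij)
  show "betai E a \<circ> beta E a = id"
    by (rule ext) (auto simp: beta_def betai_def field_simps)
  show "beta E a \<circ> betai E a = id"
    by (rule ext) (auto simp: beta_def betai_def field_simps)
qed

lemma beta_comm:
  assumes sym: "\<And>a b. E a b \<Longrightarrow> E b a" and irr: "\<And>a. \<not> E a a" and ab: "E a b"
  shows "beta E a \<circ> beta E b = beta E b \<circ> beta E a"
proof (rule ext)
  fix z :: "('a \<times> 'a) \<times> rat"
  obtain p x where z: "z = (p,x)" by (cases z)
  have "a \<noteq> b" using ab irr by blast
  have nb: "\<not> (dep E p \<and> (a = fst p \<or> a = snd p) \<and> (b = fst p \<or> b = snd p))"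
    using \<open>a \<noteq> b\<close> ab sym unfolding dep_def by blast
  show "(beta E a \<circ> beta E b) z = (beta E b \<circ> beta E a) z"
    using nb \<open>a \<noteq> b\<close> unfolding z by (auto simp: beta_def)
qed

definition Phi :: "('v \<Rightarrow> 'v \<Rightarrow> bool) \<Rightarrow> 'v list \<Rightarrow> 'v pt \<Rightarrow> 'v pt" where
  "Phi E w = foldr (\<lambda>a f. beta E a \<circ> f) w id"

lemma Phi_Nil[simp]: "Phi E [] = id" by (simp add: Phi_def)
lemma Phi_Cons[simp]: "Phi E (a # w) = beta E a \<circ> Phi E w" by (simp add: Phi_def)
lemma Phi_append: "Phi E (u @ w) = Phi E u \<circ> Phi E w"
  by (induction u) (auto simp: comp_assoc)

lemma bij_Phi: "bij (Phi E w)"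
proof (induction w)
  case Nil then show ?case using bij_id by (simp add: id_def)
next
  case (Cons a w)
  then show ?case unfolding Phi_Cons by (rule bij_comp[OF _ bij_beta])
qed

lemma Phi_swap:
  assumes sym: "\<And>a b. E a b \<Longrightarrow> E b a" and irr: "\<And>a. \<not> E a a" and "(x,y) \<in> swap_step E"
  shows "Phi E x = Phi E y"
proof -
  obtain l a b r where xy: "x = l @ [a,b] @ r" "y = l @ [b,a] @ r" and ab: "E a b"
    using assms(3) unfolding swap_step_def by blast
  have "beta E a \<circ> (beta E b \<circ> Phi E r) = beta E b \<circ> (beta E a \<circ> Phi E r)"
    using beta_comm[of E a b, OF sym irr ab] by (metis comp_assoc)
  then show ?thesis unfolding xy Phi_append by (simp add: comp_assoc)
qed

lemma Phi_tr:
  assumes sym: "\<And>a b. E a b \<Longrightarrow> E b a" and irr: "\<And>a. \<not> E a a" and "(x,y) \<in> trace_eq E"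
  shows "Phi E x = Phi E y"
  using assms(3) unfolding trace_eq_def
proof (induction rule: rtrancl_induct)
  case base then show ?case by simp
next
  case (step y z)
  then show ?case using Phi_swap[of E y z, OF sym irr] Phi_swap[of E z y, OF sym irr] by auto
qed

fun vv :: "'v \<times> 'v \<Rightarrow> 'v list \<Rightarrow> nat" where
  "vv p [] = 0"
| "vv p (a # w) = 3 * vv p w + (if a = fst p then 1 else 2)"

lemma vv_inj: "set u \<subseteq> {fst p, snd p} \<Longrightarrow> set v \<subseteq> {fst p, snd p} \<Longrightarrow> vv p u = vv p v \<Longrightarrow> u = v"
proof (induction u arbitrary: v)
  case Nil then show ?case by (cases v) (auto split: if_splits)
next
  case (Cons a u)
  show ?case
  proof (cases v)
    case Nil then show ?thesis using Cons.prems by (auto split: if_splits)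
  next
    case (Cons b v')
    have m: "(if a = fst p then 1 else 2::nat) = (if b = fst p then 1 else 2)"
      using \<open>vv p (a # u) = vv p v\<close> unfolding Cons
      by (simp split: if_splits) presburger+
    then have "a = b" using \<open>set (a # u) \<subseteq> {fst p, snd p}\<close> \<open>set v \<subseteq> {fst p, snd p}\<close> unfolding Cons
      by (auto split: if_splits)
    moreover have "vv p u = vv p v'" using m \<open>vv p (a # u) = vv p v\<close> unfolding Cons by simp
    ultimately show ?thesis using Cons.IH[of v'] Cons.prems unfolding Cons by auto
  qed
qed

lemma Phi_val: "dep E p \<Longrightarrow> Phi E w (p, 0) = (p, of_nat (vv p (proj p w)))"
  by (induction w) (auto simp: beta_def)

lemma Phi_inj:
  assumes sym: "\<And>a b. E a b \<Longrightarrow> E b a" and irr: "\<And>a. \<not> E a a" and "Phi E u = Phi E v"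
  shows "(u,v) \<in> trace_eq E"
proof -
  have "\<forall>p. \<not> E (fst p) (snd p) \<longrightarrow> proj p u = proj p v"
  proof (intro allI impI)
    fix p assume p: "\<not> E (fst p) (snd p)"
    then have d: "dep E p" by (simp add: dep_def)
    have "(of_nat (vv p (proj p u)) :: rat) = of_nat (vv p (proj p v))"
      using Phi_val[OF d, of u] Phi_val[OF d, of v] assms(3) by simp
    then have "vv p (proj p u) = vv p (proj p v)" by simp
    then show "proj p u = proj p v" by (rule vv_inj[rotated 2]) auto
  qed
  note pl = proj_lemma[where E=E and u=u and v=v]
  show ?thesis by (rule pl) (use sym irr \<open>\<forall>p. _\<close> in auto)
qed



definition tr_grp :: "('a,'m) monoid_scheme \<Rightarrow> ('a \<Rightarrow> 'b) \<Rightarrow> 'b monoid" where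
  "tr_grp H emb = \<lparr>carrier = emb ` carrier H,
     mult = (\<lambda>x y. emb (inv_into (carrier H) emb x \<otimes>\<^bsub>H\<^esub> inv_into (carrier H) emb y)),
     one = emb \<one>\<^bsub>H\<^esub>\<rparr>"

lemma tr_mult:
  assumes "inj_on emb (carrier H)" "x \<in> carrier H" "y \<in> carrier H"
  shows "emb x \<otimes>\<^bsub>tr_grp H emb\<^esub> emb y = emb (x \<otimes>\<^bsub>H\<^esub> y)"
  using assms by (simp add: tr_grp_def inv_into_f_f)

lemma tr_one: "\<one>\<^bsub>tr_grp H emb\<^esub> = emb \<one>\<^bsub>H\<^esub>" by (simp add: tr_grp_def)
lemma tr_carrier: "carrier (tr_grp H emb) = emb ` carrier H" by (simp add: tr_grp_def)

lemma tr_group: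
  assumes G: "group H" and inj: "inj_on emb (carrier H)"
  shows "group (tr_grp H emb)"
proof -
  interpret group H by (rule G)
  show ?thesis
  proof (rule groupI)
    fix x y assume "x \<in> carrier (tr_grp H emb)" "y \<in> carrier (tr_grp H emb)"
    then obtain a b where "a \<in> carrier H" "b \<in> carrier H" "x = emb a" "y = emb b"
      by (auto simp: tr_carrier)
    then show "x \<otimes>\<^bsub>tr_grp H emb\<^esub> y \<in> carrier (tr_grp H emb)"
      using tr_mult[OF inj] by (simp add: tr_carrier)
  next
    show "\<one>\<^bsub>tr_grp H emb\<^esub> \<in> carrier (tr_grp H emb)" by (simp add: tr_carrier tr_one)
  next
    fix x y z assume "x \<in> carrier (tr_grp H emb)" "y \<in> carrier (tr_grp H emb)" "z \<in> carrier (tr_grp H emb)"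
    then obtain a b c where "a \<in> carrier H" "b \<in> carrier H" "c \<in> carrier H" "x = emb a" "y = emb b" "z = emb c"
      by (auto simp: tr_carrier)
    then show "x \<otimes>\<^bsub>tr_grp H emb\<^esub> y \<otimes>\<^bsub>tr_grp H emb\<^esub> z = x \<otimes>\<^bsub>tr_grp H emb\<^esub> (y \<otimes>\<^bsub>tr_grp H emb\<^esub> z)"
      using tr_mult[OF inj] by (simp add: m_assoc)
  next
    fix x assume "x \<in> carrier (tr_grp H emb)"
    then obtain a where "a \<in> carrier H" "x = emb a" by (auto simp: tr_carrier)
    then show "\<one>\<^bsub>tr_grp H emb\<^esub> \<otimes>\<^bsub>tr_grp H emb\<^esub> x = x"
      using tr_mult[OF inj] by (simp add: tr_one)
  next
    fix x assume "x \<in> carrier (tr_grp H emb)"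
    then obtain a where a: "a \<in> carrier H" "x = emb a" by (auto simp: tr_carrier)
    then have "emb (inv\<^bsub>H\<^esub> a) \<otimes>\<^bsub>tr_grp H emb\<^esub> x = \<one>\<^bsub>tr_grp H emb\<^esub>"
      using tr_mult[OF inj] by (simp add: tr_one)
    moreover have "emb (inv\<^bsub>H\<^esub> a) \<in> carrier (tr_grp H emb)" using a by (simp add: tr_carrier)
    ultimately show "\<exists>y\<in>carrier (tr_grp H emb). y \<otimes>\<^bsub>tr_grp H emb\<^esub> x = \<one>\<^bsub>tr_grp H emb\<^esub>" by blast
  qed
qed

definition enc :: "'v pt \<Rightarrow> 'v list set" where
  "enc z = {[fst (fst z), snd (fst z)], replicate (to_nat (snd z) + 3) (fst (fst z))}"

lemma enc_inj: "enc z = enc z' \<Longrightarrow> z = z'"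
proof -
  assume h: "enc z = enc z'"
  obtain a b x where z: "z = ((a,b),x)" by (cases z) auto
  obtain a' b' x' where z': "z' = ((a',b'),x')" by (cases z') auto
  have e: "{[a,b], replicate (to_nat x + 3) a} = {[a',b'], replicate (to_nat x' + 3) a'}"
    using h unfolding z z' enc_def by simp
  have "[a,b] \<in> {[a',b'], replicate (to_nat x' + 3) a'}" using e by blast
  moreover have "[a,b] \<noteq> replicate (to_nat x' + 3) a'"
  proof
    assume "[a,b] = replicate (to_nat x' + 3) a'"
    then have "length [a,b] = length (replicate (to_nat x' + 3) a')" by (rule arg_cong)
    then show False by simp
  qed
  ultimately have ab: "a = a'" "b = b'" by auto
  have "replicate (to_nat x + 3) a \<in> {[a',b'], replicate (to_nat x' + 3) a'}" using e by blast
  moreover have "replicate (to_nat x + 3) a \<noteq> [a',b']"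
  proof
    assume "replicate (to_nat x + 3) a = [a',b']"
    then have "length (replicate (to_nat x + 3) a) = length [a',b']" by (rule arg_cong)
    then show False by simp
  qed
  ultimately have "replicate (to_nat x + 3) a = replicate (to_nat x' + 3) a" using ab by auto
  then have "length (replicate (to_nat x + 3) a) = length (replicate (to_nat x' + 3) a)" by (rule arg_cong)
  then have "to_nat x = to_nat x'" by simp
  then have "x = x'" by simp
  then show ?thesis using z z' ab by simp
qed

definition iota :: "('v pt \<Rightarrow> 'v pt) \<Rightarrow> ('v list set \<times> 'v list set) set list" where
  "iota f = [{(enc z, enc (f z)) | z. True}]"

lemma iota_inj: "inj iota"
proof (rule injI)
  fix f g :: "'v pt \<Rightarrow> 'v pt"
  assume h: "iota f = iota g"
  show "f = g"
  proof
    fix z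
    have "(enc z, enc (f z)) \<in> {(enc z, enc (f z)) | z. True}" by blast
    moreover have "{(enc z, enc (f z)) | z. True} = {(enc z, enc (g z)) | z. True}" using h unfolding iota_def by simp
    ultimately have "(enc z, enc (f z)) \<in> {(enc z, enc (g z)) | z. True}" by (rule back_subst)
    then obtain z' where "enc z = enc z'" "enc (f z) = enc (g z')" by auto
    then show "f z = g z" using enc_inj by metis
  qed
qed



definition psi :: "('v \<Rightarrow> 'v \<Rightarrow> bool) \<Rightarrow> 'v list set \<Rightarrow> 'v pt \<Rightarrow> 'v pt" where
  "psi E X = Phi E (SOME w. X = word_class E w)"

lemma psi_wc:
  assumes sym: "\<And>a b. E a b \<Longrightarrow> E b a" and irr: "\<And>a. \<not> E a a"
  shows "psi E (word_class E w) = Phi E w"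
proof -
  have "word_class E w = word_class E (SOME w'. word_class E w = word_class E w')"
    by (rule someI[of "\<lambda>w'. word_class E w = word_class E w'" w]) simp
  then have tw: "(w, SOME w'. word_class E w = word_class E w') \<in> trace_eq E" by (simp add: wc_eq)
  have "Phi E w = Phi E (SOME w'. word_class E w = word_class E w')"
    using sym irr tw by (rule Phi_tr)
  then show ?thesis unfolding psi_def by simp
qed

lemma psi_inj:
  assumes sym: "\<And>a b. E a b \<Longrightarrow> E b a" and irr: "\<And>a. \<not> E a a"
    and X: "X \<in> graph_monoid V E" and Y: "Y \<in> graph_monoid V E" and eq: "psi E X = psi E Y"
  shows "X = Y"
proof -
  obtain u where u: "X = word_class E u" using X unfolding graph_monoid_def by blast
  obtain w where w: "Y = word_class E w" using Y unfolding graph_monoid_def by blast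
  have pe: "Phi E u = Phi E w" using eq unfolding u w by (simp add: psi_wc[where E=E, OF sym irr])
  have "(u,w) \<in> trace_eq E" using sym irr pe by (rule Phi_inj)
  then show ?thesis unfolding u w wc_eq .
qed

lemma keyK:
  assumes sym: "\<And>a b. E a b \<Longrightarrow> E b a" and irr: "\<And>a. \<not> E a a"
  shows "s \<in> IH V E \<Longrightarrow> \<exists>h. bij h \<and> (\<forall>X Y. (X,Y) \<in> s \<longrightarrow>
            X \<in> graph_monoid V E \<and> Y \<in> graph_monoid V E \<and> psi E Y = psi E X \<circ> h)"
proof (induction rule: IH.induct)
  case (gen a)
  obtain wa where wa: "a = word_class E wa" "set wa \<subseteq> V" using gen unfolding graph_monoid_def by blast
  have "\<forall>X Y. (X,Y) \<in> rho V E a \<longrightarrow>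
            X \<in> graph_monoid V E \<and> Y \<in> graph_monoid V E \<and> psi E Y = psi E X \<circ> Phi E wa"
  proof (intro allI impI)
    fix X Y assume "(X,Y) \<in> rho V E a"
    then have X: "X \<in> graph_monoid V E" and Y: "Y = gm_mult E X a" unfolding rho_def by auto
    obtain u where u: "X = word_class E u" "set u \<subseteq> V" using X unfolding graph_monoid_def by blast
    have Y': "Y = word_class E (u @ wa)" unfolding Y u wa gm_mult_wc ..
    have "set (u @ wa) \<subseteq> V" using u wa by simp
    then have "Y \<in> graph_monoid V E" unfolding Y' graph_monoid_def by blast
    moreover have "psi E Y = psi E X \<circ> Phi E wa"
      unfolding Y' u by (simp add: psi_wc[where E=E, OF sym irr] Phi_append)
    ultimately show "X \<in> graph_monoid V E \<and> Y \<in> graph_monoid V E \<and> psi E Y = psi E X \<circ> Phi E wa"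
      using X by blast
  qed
  then show ?case using bij_Phi by blast
next
  case ident
  have "\<forall>X Y. (X,Y) \<in> Id_on (graph_monoid V E) \<longrightarrow>
            X \<in> graph_monoid V E \<and> Y \<in> graph_monoid V E \<and> psi E Y = psi E X \<circ> id" by auto
  then show ?case using bij_id by blast
next
  case (comp s t)
  obtain hs where hs: "bij hs" "\<forall>X Y. (X,Y) \<in> s \<longrightarrow>
            X \<in> graph_monoid V E \<and> Y \<in> graph_monoid V E \<and> psi E Y = psi E X \<circ> hs" using comp.IH(1) by blast
  obtain ht where ht: "bij ht" "\<forall>X Y. (X,Y) \<in> t \<longrightarrow>
            X \<in> graph_monoid V E \<and> Y \<in> graph_monoid V E \<and> psi E Y = psi E X \<circ> ht" using comp.IH(2) by blast
  have "\<forall>X Z. (X,Z) \<in> s O t \<longrightarrow>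
            X \<in> graph_monoid V E \<and> Z \<in> graph_monoid V E \<and> psi E Z = psi E X \<circ> (hs \<circ> ht)"
  proof (intro allI impI)
    fix X Z assume "(X,Z) \<in> s O t"
    then obtain Y where "(X,Y) \<in> s" "(Y,Z) \<in> t" by blast
    then have "X \<in> graph_monoid V E" "Z \<in> graph_monoid V E" "psi E Y = psi E X \<circ> hs" "psi E Z = psi E Y \<circ> ht"
      using hs(2) ht(2) by auto
    then show "X \<in> graph_monoid V E \<and> Z \<in> graph_monoid V E \<and> psi E Z = psi E X \<circ> (hs \<circ> ht)"
      by (simp add: comp_assoc)
  qed
  moreover have "bij (hs \<circ> ht)" using hs(1) ht(1) by (rule bij_comp[rotated])
  ultimately show ?case by blast
next
  case (inv s)
  obtain hs where hs: "bij hs" "\<forall>X Y. (X,Y) \<in> s \<longrightarrow>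
            X \<in> graph_monoid V E \<and> Y \<in> graph_monoid V E \<and> psi E Y = psi E X \<circ> hs" using inv.IH by blast
  have "\<forall>X Y. (X,Y) \<in> s\<inverse> \<longrightarrow>
            X \<in> graph_monoid V E \<and> Y \<in> graph_monoid V E \<and> psi E Y = psi E X \<circ> inv_into UNIV hs"
  proof (intro allI impI)
    fix X Y assume "(X,Y) \<in> s\<inverse>"
    then have "(Y,X) \<in> s" by simp
    then have m: "X \<in> graph_monoid V E" "Y \<in> graph_monoid V E" and e: "psi E X = psi E Y \<circ> hs"
      using hs(2) by auto
    have "psi E X \<circ> inv_into UNIV hs = psi E Y \<circ> (hs \<circ> inv_into UNIV hs)" unfolding e by (simp add: comp_assoc)
    also have "hs \<circ> inv_into UNIV hs = id" using hs(1) by (simp add: surj_iff[symmetric] bij_is_surj)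
    finally have c: "psi E X \<circ> inv_into UNIV hs = psi E Y \<circ> id" .
    show "X \<in> graph_monoid V E \<and> Y \<in> graph_monoid V E \<and> psi E Y = psi E X \<circ> inv_into UNIV hs"
      using m c[unfolded comp_id, symmetric] by blast
  qed
  moreover have "bij (inv_into UNIV hs)" using hs(1) by (rule bij_imp_bij_inv)
  ultimately show ?case by blast
qed

lemma comp_cancel: "bij f \<Longrightarrow> f \<circ> g = f \<circ> g' \<Longrightarrow> g = g'"
proof -
  assume b: "bij f" and e: "f \<circ> g = f \<circ> g'"
  show "g = g'"
  proof
    fix x
    have "f (g x) = f (g' x)" using fun_cong[OF e, of x] by simp
    then show "g x = g' x" by (rule injD[OF bij_is_inj[OF b]])
  qed
qed

definition hh :: "('v \<Rightarrow> 'v \<Rightarrow> bool) \<Rightarrow> ('v list set \<times> 'v list set) set \<Rightarrow> 'v pt \<Rightarrow> 'v pt" where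
  "hh E s = (THE h. bij h \<and> (\<forall>X Y. (X,Y) \<in> s \<longrightarrow> psi E Y = psi E X \<circ> h))"

lemma hh_unique:
  assumes "s \<noteq> {}" and h: "bij h" "\<forall>X Y. (X,Y) \<in> s \<longrightarrow> psi E Y = psi E X \<circ> h"
  shows "hh E s = h"
  unfolding hh_def
proof (rule the_equality)
  show "bij h \<and> (\<forall>X Y. (X,Y) \<in> s \<longrightarrow> psi E Y = psi E X \<circ> h)" using h by blast
next
  fix h' assume h': "bij h' \<and> (\<forall>X Y. (X,Y) \<in> s \<longrightarrow> psi E Y = psi E X \<circ> h')"
  obtain X Y where XY: "(X,Y) \<in> s" using assms(1) by auto
  have "psi E Y = psi E X \<circ> h'" "psi E Y = psi E X \<circ> h" using h(2) h' XY by auto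
  then have "psi E X \<circ> h' = psi E X \<circ> h" by simp
  moreover have "bij (psi E X)" unfolding psi_def by (rule bij_Phi)
  ultimately show "h' = h" using comp_cancel by blast
qed

lemma hh_prop:
  assumes sym: "\<And>a b. E a b \<Longrightarrow> E b a" and irr: "\<And>a. \<not> E a a"
    and "s \<in> IH V E" "s \<noteq> {}"
  shows "bij (hh E s) \<and> (\<forall>X Y. (X,Y) \<in> s \<longrightarrow>
     X \<in> graph_monoid V E \<and> Y \<in> graph_monoid V E \<and> psi E Y = psi E X \<circ> hh E s)"
proof -
  obtain h where h: "bij h" "\<forall>X Y. (X,Y) \<in> s \<longrightarrow>
            X \<in> graph_monoid V E \<and> Y \<in> graph_monoid V E \<and> psi E Y = psi E X \<circ> h"
    using keyK[OF sym irr assms(3)] by blast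
  then have "hh E s = h" using hh_unique[OF assms(4)] by blast
  then show ?thesis using h by simp
qed

lemma Bij_UNIV: "Bij UNIV = {f. bij f}"
  unfolding Bij_def by (auto simp: extensional_def)

lemma BijG_mult: "bij f \<Longrightarrow> bij g \<Longrightarrow> f \<otimes>\<^bsub>BijGroup UNIV\<^esub> g = f \<circ> g"
  by (simp add: BijGroup_def Bij_UNIV compose_def restrict_UNIV comp_def)

lemma BijG_one: "\<one>\<^bsub>BijGroup UNIV\<^esub> = id"
  by (simp add: BijGroup_def restrict_UNIV id_def)

theorem corollary3p4:
  fixes V :: "'v set" and E :: "'v \<Rightarrow> 'v \<Rightarrow> bool"
  assumes "is_graph V E"
  shows "strongly_E_star_unitary (polygraph_monoid V E) (\<lambda>s t. s O t) {}"
proof -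
  have sym: "\<And>a b. E a b \<Longrightarrow> E b a" and irr: "\<And>a. \<not> E a a"
    using assms unfolding is_graph_def by auto
  define H where "H = BijGroup (UNIV :: 'v pt set)"
  define G where "G = tr_grp H iota"
  define \<theta> where "\<theta> = (\<lambda>s. if s = {} then None else Some (iota (hh E s)))"
  have injH: "inj_on iota (carrier H)" using iota_inj by (auto simp: inj_on_def inj_def)
  have grp: "group G" unfolding G_def by (rule tr_group[OF _ injH]) (simp add: H_def group_BijGroup)
  have cH: "carrier H = {f. bij f}" by (simp add: H_def BijGroup_def Bij_UNIV)
  have S: "\<And>a. a \<in> polygraph_monoid V E \<Longrightarrow> a \<noteq> {} \<Longrightarrow> a \<in> IH V E"
    unfolding polygraph_monoid_def by auto
  have one: "\<one>\<^bsub>G\<^esub> = iota id" unfolding G_def tr_one H_def BijG_one ..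
  have idem: "\<And>a. a \<in> IH V E \<Longrightarrow> a \<noteq> {} \<Longrightarrow> hh E a = id \<longleftrightarrow> a O a = a"
  proof -
    fix a assume a: "a \<in> IH V E" "a \<noteq> {}"
    note P = hh_prop[OF sym irr a]
    show "hh E a = id \<longleftrightarrow> a O a = a"
    proof
      assume h: "hh E a = id"
      have "\<forall>X Y. (X,Y) \<in> a \<longrightarrow> X = Y"
      proof (intro allI impI)
        fix X Y assume "(X,Y) \<in> a"
        then have "X \<in> graph_monoid V E" "Y \<in> graph_monoid V E" "psi E Y = psi E X \<circ> hh E a"
          using P by auto
        then have m: "X \<in> graph_monoid V E" "Y \<in> graph_monoid V E" and pe: "psi E X = psi E Y"
          using h by auto
        show "X = Y" using sym irr m pe by (rule psi_inj)
      qed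
      then show "a O a = a" by auto
    next
      assume aa: "a O a = a"
      obtain X Y where XY: "(X,Y) \<in> a" using a(2) by auto
      then have "(X,Y) \<in> a O a" using aa by simp
      then obtain Z where Z: "(X,Z) \<in> a" "(Z,Y) \<in> a" by blast
      have "psi E X \<circ> (hh E a \<circ> hh E a) = psi E X \<circ> (hh E a \<circ> id)"
      proof -
        have e1: "psi E Z = psi E X \<circ> hh E a" using P Z(1) by blast
        have e2: "psi E Y = psi E Z \<circ> hh E a" using P Z(2) by blast
        have e3: "psi E Y = psi E X \<circ> hh E a" using P XY by blast
        have "psi E X \<circ> (hh E a \<circ> hh E a) = (psi E X \<circ> hh E a) \<circ> hh E a" by (simp add: comp_assoc)
        also have "\<dots> = psi E Y" using e1 e2 by simp
        also have "\<dots> = psi E X \<circ> (hh E a \<circ> id)" using e3 by simp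
        finally show ?thesis .
      qed
      then have "hh E a \<circ> hh E a = hh E a \<circ> id"
        using comp_cancel bij_Phi unfolding psi_def by blast
      then show "hh E a = id" using comp_cancel P by blast
    qed
  qed
  have "strong_E_unitary_witness (polygraph_monoid V E) (\<lambda>s t. s O t) {} G \<theta>"
    unfolding strong_E_unitary_witness_def
  proof (intro conjI ballI allI impI)
    show "group G" by (rule grp)
  next
    fix a g assume a: "a \<in> polygraph_monoid V E" and "\<theta> a = Some g"
    then have "a \<noteq> {}" "g = iota (hh E a)" unfolding \<theta>_def by (auto split: if_splits)
    then show "g \<in> carrier G" using hh_prop[OF sym irr S[OF a]]
      unfolding G_def tr_carrier cH by blast
  next
    fix a assume "a \<in> polygraph_monoid V E"
    show "(\<theta> a = None) = (a = {})" unfolding \<theta>_def by simp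
  next
    fix a assume a: "a \<in> polygraph_monoid V E"
    show "(\<theta> a = Some \<one>\<^bsub>G\<^esub>) = (a \<noteq> {} \<and> a O a = a)"
    proof (cases "a = {}")
      case True then show ?thesis unfolding \<theta>_def by simp
    next
      case False
      have "(\<theta> a = Some \<one>\<^bsub>G\<^esub>) = (hh E a = id)"
        unfolding \<theta>_def one using False by (auto dest: injD[OF iota_inj])
      then show ?thesis using idem[OF S[OF a False] False] False by simp
    qed
  next
    fix a b assume a: "a \<in> polygraph_monoid V E" and b: "b \<in> polygraph_monoid V E"
      and ab: "a O b \<noteq> {}"
    have an: "a \<noteq> {}" and bn: "b \<noteq> {}" using ab by auto
    have aI: "a \<in> IH V E" using S[OF a an] .
    have bI: "b \<in> IH V E" using S[OF b bn] .
    have abI: "a O b \<in> IH V E" using aI bI by (rule IH.comp)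
    note Pa = hh_prop[OF sym irr aI an] and Pb = hh_prop[OF sym irr bI bn]
    have hab: "hh E (a O b) = hh E a \<circ> hh E b"
    proof (rule hh_unique[OF ab])
      show "bij (hh E a \<circ> hh E b)" using Pa Pb by (blast intro: bij_comp)
      show "\<forall>X Y. (X, Y) \<in> a O b \<longrightarrow> psi E Y = psi E X \<circ> (hh E a \<circ> hh E b)"
      proof (intro allI impI)
        fix X Z assume "(X,Z) \<in> a O b"
        then obtain Y where "(X,Y) \<in> a" "(Y,Z) \<in> b" by blast
        then have "psi E Y = psi E X \<circ> hh E a" "psi E Z = psi E Y \<circ> hh E b" using Pa Pb by auto
        then show "psi E Z = psi E X \<circ> (hh E a \<circ> hh E b)" by (simp add: comp_assoc)
      qed
    qed
    have m1: "iota (hh E a) \<otimes>\<^bsub>G\<^esub> iota (hh E b) = iota (hh E a \<otimes>\<^bsub>H\<^esub> hh E b)"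
      unfolding G_def by (rule tr_mult[OF injH]) (use Pa Pb in \<open>simp_all add: cH\<close>)
    have m2: "hh E a \<otimes>\<^bsub>H\<^esub> hh E b = hh E a \<circ> hh E b"
      unfolding H_def using Pa Pb BijG_mult by blast
    have "iota (hh E a) \<otimes>\<^bsub>G\<^esub> iota (hh E b) = iota (hh E a \<circ> hh E b)"
      using m1 m2 by simp
    with hab show "\<theta> (a O b) = Some (the (\<theta> a) \<otimes>\<^bsub>G\<^esub> the (\<theta> b))"
      unfolding \<theta>_def using an bn ab by simp
  qed
  then show ?thesis unfolding strongly_E_star_unitary_def G_def by blast
qed

end
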